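(* Let $n\ge 2$ be an integer. For $\alpha,\beta\in\{0,1,\ldots,2^n-1\}$ define $f_{\alpha,\beta}:\{0,\ldots,2^n-1\}\to\{0,\ldots,2^n-1\}$ by $f_{\alpha,\beta}(x)=\big((\alpha+x)\bmod 2^n\big)\oplus\big((\beta+x)\bmod 2^n\big)$. Call a finite set $Q$ of pairs $(\alpha,\beta)$ a determining set if for all $x,x'\in\{0,\ldots,2^n-1\}$, the condition $f_{\alpha,\beta}(x)=f_{\alpha,\beta}(x')$ for every $(\alpha,\beta)\in Q$ implies $x\equiv x'\pmod{2^{n-1}}$. Then the minimum cardinality of a determining set is $1$ if $n=2$, and $2$ if $n>2$.
   Context: $\oplus$ denotes bitwise exclusive OR (XOR) of the binary representations of non-negative integers. A determining set is one whose query values $f_{\alpha,\beta}(x)$ recover $x$ modulo $2^{n-1}$ uniquely (the most significant bit of $x$ cannot be recovered in general, since $((\alpha+(x\oplus 2^{n-1}))\bmod 2^n)=((\alpha+x)\bmod 2^n)\oplus 2^{n-1}$). *)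

theory Defs
  imports Main
begin

definition qf :: "nat \<Rightarrow> nat \<Rightarrow> nat \<Rightarrow> nat \<Rightarrow> nat" where
  "qf n \<alpha> \<beta> x = Bit_Operations.xor ((\<alpha> + x) mod 2 ^ n) ((\<beta> + x) mod 2 ^ n)"

definition determining_set :: "nat \<Rightarrow> (nat \<times> nat) set \<Rightarrow> bool" where
  "determining_set n Q \<longleftrightarrow> finite Q \<and> Q \<subseteq> {0..<2 ^ n} \<times> {0..<2 ^ n} \<and>
     (\<forall>x \<in> {0..<2 ^ n}. \<forall>x' \<in> {0..<2 ^ n}.
        (\<forall>(\<alpha>, \<beta>) \<in> Q. qf n \<alpha> \<beta> x = qf n \<alpha> \<beta> x') \<longrightarrow> x mod 2 ^ (n - 1) = x' mod 2 ^ (n - 1))"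

end

theory Submission
  imports Defs
begin

definition carry :: "nat \<Rightarrow> nat \<Rightarrow> nat \<Rightarrow> bool" where
  "carry a b k \<longleftrightarrow> 2 ^ k \<le> take_bit k a + take_bit k b"

lemma div_split: "(a + b) div 2^k = a div 2^k + b div 2^k + (take_bit k a + take_bit k b) div 2^k"
  for a b :: nat
proof -
  have a: "a = a div 2^k * 2^k + take_bit k a" by (metis div_mult_mod_eq take_bit_eq_mod)
  have b: "b = b div 2^k * 2^k + take_bit k b" by (metis div_mult_mod_eq take_bit_eq_mod)
  have "a + b = (take_bit k a + take_bit k b) + (a div 2^k + b div 2^k) * 2^k"
    using a b by (simp add: algebra_simps)
  then show ?thesis by simp
qed

lemma carry_div: "(take_bit k a + take_bit k b) div 2^k = of_bool (carry a b k)" for a b :: nat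
proof -
  have "take_bit k a < 2^k" "take_bit k b < 2^k" by (simp_all add: take_bit_eq_mod)
  then have "take_bit k a + take_bit k b < 2 * 2^k" by linarith
  then show ?thesis unfolding carry_def
    by (auto simp: div_eq_0_iff intro!: div_nat_eqI)
qed

lemma bit_add_carry: "bit (a + b) k \<longleftrightarrow> ((bit a k \<noteq> bit b k) \<noteq> carry a b k)" for a b :: nat
proof -
  have "bit (a + b) k \<longleftrightarrow> odd (a div 2^k + b div 2^k + of_bool (carry a b k))"
    unfolding bit_iff_odd by (subst div_split, subst carry_div, rule refl)
  also have "\<dots> \<longleftrightarrow> ((odd (a div 2^k) \<noteq> odd (b div 2^k)) \<noteq> carry a b k)"
    by (cases "carry a b k") auto
  finally show ?thesis by (simp only: bit_iff_odd)
qed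

lemma two_le_aux: "r < p \<Longrightarrow> (2*p \<le> p*m + r) = (2 \<le> (m::nat))"
proof (cases "m \<ge> 2")
  case True
  then have "2 * p \<le> p * m" by (simp add: mult.commute)
  then show ?thesis using True by linarith
next
  case False
  assume r: "r < p"
  then have "m \<le> 1" using False by simp
  then have "p * m \<le> p" by (cases m) auto
  then show ?thesis using False r by linarith
qed

lemma carry_Suc: "carry a b (Suc k) \<longleftrightarrow> (bit a k \<and> bit b k) \<or> (bit a k \<and> carry a b k) \<or> (bit b k \<and> carry a b k)"
  for a b :: nat
proof -
  define p :: nat where "p = 2^k"
  define A :: nat where "A = of_bool (bit a k)"
  define B :: nat where "B = of_bool (bit b k)"
  define C :: nat where "C = of_bool (carry a b k)"
  define r where "r = (take_bit k a + take_bit k b) mod p"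
  have s: "take_bit k a + take_bit k b = p * C + r"
    unfolding p_def r_def C_def by (metis carry_div div_mult_mod_eq mult.commute)
  have ta: "take_bit (Suc k) a = p * A + take_bit k a" unfolding p_def A_def by (rule take_bit_Suc_from_most)
  have tb: "take_bit (Suc k) b = p * B + take_bit k b" unfolding p_def B_def by (rule take_bit_Suc_from_most)
  have e: "take_bit (Suc k) a + take_bit (Suc k) b = p * (A + B + C) + r"
    using ta tb s by (simp add: distrib_left)
  have rp: "r < p" unfolding r_def p_def by simp
  have "carry a b (Suc k) \<longleftrightarrow> 2 * p \<le> p * (A + B + C) + r"
    unfolding carry_def e p_def by (simp only: power_Suc)
  also have "\<dots> \<longleftrightarrow> 2 \<le> A + B + C" using two_le_aux rp by blast
  finally have "carry a b (Suc k) \<longleftrightarrow> 2 \<le> A + B + C" .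
  then show ?thesis unfolding A_def B_def C_def
    by (cases "bit a k"; cases "bit b k"; cases "carry a b k") simp_all
qed


lemma bit_qf0: "k < n \<Longrightarrow> bit (qf n 0 d x) k \<longleftrightarrow> (bit d k \<noteq> carry d x k)"
  unfolding qf_def by (simp add: bit_xor_iff flip: take_bit_eq_mod add: bit_take_bit_iff bit_add_carry) auto

lemma carry_take: "take_bit k x = take_bit k x' \<Longrightarrow> carry d x k = carry d x' k"
  unfolding carry_def by simp

lemma carry_0: "\<not> carry a b 0" unfolding carry_def by simp

lemma upper_core:
  assumes n: "3 \<le> n"
    and bd: "\<And>i. bit d i \<longleftrightarrow> i < n - 1 \<and> even i"
    and be: "\<And>i. bit e i \<longleftrightarrow> i < n - 1 \<and> odd i"
    and qd: "qf n 0 d x = qf n 0 d x'" and qe: "qf n 0 e x = qf n 0 e x'"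
  shows "take_bit (n - 1) x = take_bit (n - 1) x'"
proof -
  have cd: "carry d x k = carry d x' k" if "k < n" for k
    using bit_qf0[OF that, of d x] bit_qf0[OF that, of d x'] qd by auto
  have ce: "carry e x k = carry e x' k" if "k < n" for k
    using bit_qf0[OF that, of e x] bit_qf0[OF that, of e x'] qe by auto
  have "k \<le> n - 1 \<longrightarrow> take_bit k x = take_bit k x'" for k
  proof (induction k)
    case 0
    then show ?case by simp
  next
    case (Suc k)
    show ?case
    proof
      assume sk: "Suc k \<le> n - 1"
      then have tk: "take_bit k x = take_bit k x'" using Suc.IH by simp
      have kn: "k < n - 1" using sk by simp
      have "bit x k = bit x' k"
      proof (rule ccontr)
        assume ne: "bit x k \<noteq> bit x' k"
        have c1: "carry d x k = carry d x' k" using carry_take[OF tk] .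
        have c2: "carry e x k = carry e x' k" using carry_take[OF tk] .
        have s1: "carry d x (Suc k) = carry d x' (Suc k)" using cd sk by simp
        have s2: "carry e x (Suc k) = carry e x' (Suc k)" using ce sk by simp
        have eqd: "bit d k = carry d x k"
          using s1 ne c1 unfolding carry_Suc by auto
        have eqe: "bit e k = carry e x k"
          using s2 ne c2 unfolding carry_Suc by auto
        show False
        proof (cases k)
          case 0
          then show False using eqd bd[of 0] carry_0 n by auto
        next
          case (Suc j)
          have dj: "bit d k \<longleftrightarrow> \<not> bit d j" using bd[of k] bd[of j] kn Suc by auto
          have ej: "bit e k \<longleftrightarrow> bit d j" using be[of k] bd[of j] kn Suc by auto
          have "carry d x k = (\<not> bit d j)" using eqd dj by simp
          then have x1: "bit x j = (\<not> bit d j)" unfolding Suc carry_Suc by auto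
          have "carry e x k = bit d j" using eqe ej by simp
          moreover have "bit e j = (\<not> bit d j)" using be[of j] bd[of j] kn Suc by auto
          ultimately have x2: "bit x j = bit d j" unfolding Suc carry_Suc by auto
          show False using x1 x2 by simp
        qed
      qed
      then show "take_bit (Suc k) x = take_bit (Suc k) x'"
        by (simp add: take_bit_Suc_from_most tk)
    qed
  qed
  then show ?thesis by simp
qed

lemma and_pow: "j \<noteq> m \<Longrightarrow> Bit_Operations.and ((2::nat)^m) (2^j) = 0"
  by (auto simp: bit_eq_iff bit_simps)

lemma t2: "2 \<le> m \<Longrightarrow> xor (1::nat) (2^m) = 2^m + 1"
proof -
  assume m: "2 \<le> m"
  have "(2::nat)^m + 2^0 = xor (2^m) (2^0)" by (rule disjunctive_add_eq_xor, rule and_pow) (use m in auto)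
  then show ?thesis by (simp add: xor.commute)
qed

lemma bit3: "bit (3::nat) n \<longleftrightarrow> n = 0 \<or> n = 1"
proof (cases n)
  case 0 then show ?thesis by simp
next
  case (Suc k)
  have "bit (3::nat) (Suc k) = bit ((3::nat) div 2) k" by (simp add: bit_Suc)
  also have "\<dots> = bit (1::nat) k" by simp
  also have "\<dots> \<longleftrightarrow> k = 0" by (rule bit_1_iff)
  finally show ?thesis using Suc by simp
qed

lemma t3: "xor (1::nat) 0 = xor 3 2" by simp

lemma t1: "2 \<le> m \<Longrightarrow> xor (3::nat) (2^m + 2) = 2^m + 1"
proof -
  assume m: "2 \<le> m"
  have a: "(2::nat)^m + 2^1 = xor (2^m) (2^1)" by (rule disjunctive_add_eq_xor, rule and_pow) (use m in auto)
  have b: "(2::nat)^m + 2^0 = xor (2^m) (2^0)" by (rule disjunctive_add_eq_xor, rule and_pow) (use m in auto)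
  have "xor 3 (xor (2^m) 2) = xor (2^m) (1::nat)"
  proof (rule bit_eqI)
    fix k
    show "bit (xor (3::nat) (xor (2^m) 2)) k = bit (xor (2^m) (1::nat)) k"
      unfolding bit_xor_iff bit3 bit_exp_iff bit_2_iff bit_1_iff using m by auto
  qed
  then show ?thesis using a b by simp
qed




lemma hi: "(d::nat) < 2^n \<Longrightarrow> n \<le> k \<Longrightarrow> \<not> bit d k"
  by (metis bit_take_bit_iff not_le take_bit_nat_eq_self_iff)

lemma lower_core:
  fixes d :: nat
  assumes n: "3 \<le> n" and d: "d < 2^n"
  shows "\<exists>y<2^n. \<exists>y'<2^n. y mod 2^(n-1) \<noteq> y' mod 2^(n-1) \<and>
           xor y ((y+d) mod 2^n) = xor y' ((y'+d) mod 2^n)"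
proof -
  obtain m where nm: "n = Suc m" and m: "2 \<le> m" using n by (metis Suc_le_D Suc_le_mono numeral_3_eq_3 numeral_2_eq_2)
  have N: "(2::nat)^n = 2 * 2^m" using nm by simp
  have "(2::nat)^2 \<le> 2^m" using m by (rule power_increasing) simp
  then have M4: "(4::nat) \<le> 2^m" by simp
  show ?thesis
  proof (cases "\<exists>j<m. \<not> bit d j")
    case True
    then obtain j where j: "j < m" "\<not> bit d j" by blast
    have jm: "(2::nat)^j < 2^m" using j by simp
    have jn: "(2::nat)^j < 2^n" using jm N by linarith
    have "Bit_Operations.and ((2::nat)^j) d = 0"
      by (rule bit_eqI) (use j in \<open>auto simp: bit_and_iff bit_exp_iff\<close>)
    then have s: "2^j + d = xor (2^j) d" by (rule disjunctive_add_eq_xor)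
    have e: "xor (2^j) ((2^j + d) mod 2^n) = d"
    proof (rule bit_eqI)
      fix k
      show "bit (xor (2^j) ((2^j + d) mod 2^n)) k = bit d k"
        unfolding s by (metis bit_xor_iff bit_exp_iff bit_take_bit_iff take_bit_eq_mod hi[OF d] not_le j(1) nm less_SucI possible_bit_nat less_trans)
    qed
    have "0 mod 2^(n-1) \<noteq> (2::nat)^j mod 2^(n-1)" using jm nm by simp
    moreover have "xor 0 ((0+d) mod 2^n) = xor (2^j) ((2^j + d) mod 2^n)" using e d by simp
    ultimately show ?thesis using jn by (metis zero_less_numeral zero_less_power)
  next
    case False
    then have all: "\<And>j. j < m \<Longrightarrow> bit d j" by blast
    have tm: "take_bit m d = 2^m - 1"
      by (metis mask_eq_exp_minus_1 bit_eqI bit_take_bit_iff bit_mask_iff all possible_bit_nat)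
    have "d = take_bit (Suc m) d" using d unfolding nm by (metis take_bit_nat_eq_self_iff)
    also have "\<dots> = 2^m * of_bool (bit d m) + (2^m - 1)" by (simp add: take_bit_Suc_from_most tm)
    finally have dd: "d = 2^m * of_bool (bit d m) + (2^m - 1)" .
    have v: "xor (1::nat) ((1+d) mod 2^n) = xor 3 ((3+d) mod 2^n)"
    proof (cases "bit d m")
      case True
      then have "d = 2^n - 1" using dd N by simp
      moreover have "(1::nat) \<le> 2^n" by simp
      ultimately have "1 + d = 2^n" "3 + d = 2 + 2^n" by linarith+
      moreover have "(2::nat) < 2^n" using M4 N by linarith
      ultimately have "(1+d) mod 2^n = 0" "(3+d) mod 2^n = 2"
        by (simp, metis mod_add_self2 mod_less)
      then show ?thesis using t3 by simp
    next
      case False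
      then have "d = 2^m - 1" using dd by simp
      then have "(1+d) mod 2^n = 2^m" "(3+d) mod 2^n = 2^m + 2" using M4 N by simp_all
      then show ?thesis using t1[OF m] t2[OF m] by simp
    qed
    have "(1::nat) mod 2^(n-1) \<noteq> 3 mod 2^(n-1)" using M4 nm by simp
    moreover have "(1::nat) < 2^n" "(3::nat) < 2^n" using M4 N by simp_all
    ultimately show ?thesis using v by blast
  qed
qed



lemma reduce:
  fixes \<alpha> \<beta> y y' :: nat
  assumes n: "1 \<le> n" and a: "\<alpha> < 2^n" and b: "\<beta> < 2^n"
    and y: "y < 2^n" and y': "y' < 2^n"
    and ne: "y mod 2^(n-1) \<noteq> y' mod 2^(n-1)"
    and eq: "xor y ((y + (\<beta> + 2^n - \<alpha>) mod 2^n) mod 2^n) = xor y' ((y' + (\<beta> + 2^n - \<alpha>) mod 2^n) mod 2^n)"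
  shows "\<exists>x\<in>{0..<2^n}. \<exists>x'\<in>{0..<2^n}. qf n \<alpha> \<beta> x = qf n \<alpha> \<beta> x' \<and> x mod 2^(n-1) \<noteq> x' mod 2^(n-1)"
proof -
  define N :: nat where "N = 2^n"
  define M :: nat where "M = 2^(n-1)"
  have MN: "M dvd N" unfolding M_def N_def using n by (simp add: le_imp_power_dvd)
  have Npos: "0 < N" unfolding N_def by simp
  have key1: "(\<alpha> + (z + N - \<alpha>) mod N) mod N = z" if "z < N" for z
  proof -
    have "(\<alpha> + (z + N - \<alpha>) mod N) mod N = (\<alpha> + (z + N - \<alpha>)) mod N" by (simp add: mod_add_right_eq)
    also have "\<alpha> + (z + N - \<alpha>) = z + N" using a unfolding N_def by simp
    finally show ?thesis using that by simp
  qed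
  have key2: "(\<beta> + (z + N - \<alpha>) mod N) mod N = (z + (\<beta> + N - \<alpha>) mod N) mod N" for z
  proof -
    have "(\<beta> + (z + N - \<alpha>) mod N) mod N = (\<beta> + (z + N - \<alpha>)) mod N" by (simp add: mod_add_right_eq)
    also have "\<beta> + (z + N - \<alpha>) = z + (\<beta> + N - \<alpha>)" using a unfolding N_def by simp
    also have "(z + (\<beta> + N - \<alpha>)) mod N = (z + (\<beta> + N - \<alpha>) mod N) mod N" by (simp add: mod_add_right_eq)
    finally show ?thesis .
  qed
  define x where "x = (y + N - \<alpha>) mod N"
  define x' where "x' = (y' + N - \<alpha>) mod N"
  have q: "qf n \<alpha> \<beta> x = qf n \<alpha> \<beta> x'"
    using eq key1[of y] key1[of y'] key2[of y] key2[of y'] y y'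
    unfolding qf_def x_def x'_def N_def by simp
  have m: "x mod M \<noteq> x' mod M"
  proof
    assume h: "x mod M = x' mod M"
    have "y mod M = ((\<alpha> + x) mod N) mod M" using key1[of y] y unfolding x_def N_def by simp
    also have "\<dots> = (\<alpha> + x) mod M" using MN by (simp add: mod_mod_cancel)
    also have "\<dots> = (\<alpha> + x') mod M" using h by (metis mod_add_right_eq)
    also have "\<dots> = ((\<alpha> + x') mod N) mod M" using MN by (simp add: mod_mod_cancel)
    also have "\<dots> = y' mod M" using key1[of y'] y' unfolding x'_def N_def by simp
    finally show False using ne unfolding M_def by simp
  qed
  have "x < 2^n" "x' < 2^n" unfolding x_def x'_def N_def by simp_all
  then show ?thesis using q m unfolding M_def by (metis atLeastLessThan_iff le0)
qed

lemma not_det_1: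
  assumes n: "3 \<le> n" and c: "card Q = 1"
  shows "\<not> determining_set n Q"
proof
  assume det: "determining_set n Q"
  obtain p where Qp: "Q = {p}" using c card_1_singletonE by blast
  obtain \<alpha> \<beta> where p: "p = (\<alpha>, \<beta>)" by (cases p)
  have sub: "Q \<subseteq> {0..<2 ^ n} \<times> {0..<2 ^ n}" and
    D: "\<forall>x \<in> {0..<2 ^ n}. \<forall>x' \<in> {0..<2 ^ n}.
        (\<forall>(\<alpha>, \<beta>) \<in> Q. qf n \<alpha> \<beta> x = qf n \<alpha> \<beta> x') \<longrightarrow> x mod 2 ^ (n - 1) = x' mod 2 ^ (n - 1)"
    using det unfolding determining_set_def by blast+
  have "(\<alpha>, \<beta>) \<in> {0..<2 ^ n} \<times> {0..<2 ^ n}" using sub unfolding Qp p by blast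
  then have a: "\<alpha> < 2^n" and b: "\<beta> < 2^n" by simp_all
  define d where "d = (\<beta> + 2^n - \<alpha>) mod 2^n"
  have "d < 2^n" unfolding d_def by simp
  from lower_core[OF n this] obtain y y' where
    yy: "y < 2^n" "y' < 2^n" "y mod 2^(n-1) \<noteq> y' mod 2^(n-1)"
        "xor y ((y+d) mod 2^n) = xor y' ((y'+d) mod 2^n)" by blast
  have "\<exists>x\<in>{0..<2^n}. \<exists>x'\<in>{0..<2^n}. qf n \<alpha> \<beta> x = qf n \<alpha> \<beta> x' \<and> x mod 2^(n-1) \<noteq> x' mod 2^(n-1)"
  proof (rule reduce[OF _ a b yy(1) yy(2) yy(3)])
    show "1 \<le> n" using n by simp
    show "xor y ((y + (\<beta> + 2^n - \<alpha>) mod 2^n) mod 2^n) = xor y' ((y' + (\<beta> + 2^n - \<alpha>) mod 2^n) mod 2^n)"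
      using yy(4) unfolding d_def .
  qed
  then obtain x x' where xx: "x \<in> {0..<2^n}" "x' \<in> {0..<2^n}" "qf n \<alpha> \<beta> x = qf n \<alpha> \<beta> x'"
    "x mod 2^(n-1) \<noteq> x' mod 2^(n-1)" by blast
  have "\<forall>(\<alpha>', \<beta>') \<in> Q. qf n \<alpha>' \<beta>' x = qf n \<alpha>' \<beta>' x'" unfolding Qp p using xx(3) by simp
  then have "x mod 2^(n-1) = x' mod 2^(n-1)" using D xx(1,2) by blast
  then show False using xx(4) by simp
qed

lemma not_det_0:
  assumes n: "2 \<le> n" shows "\<not> determining_set n {}"
proof
  assume det: "determining_set n {}"
  have "1 \<le> n - 1" using n by simp
  then have "(2::nat)^1 \<le> 2^(n-1)" by (rule power_increasing) simp
  then have "(0::nat) mod 2^(n-1) \<noteq> 1 mod 2^(n-1)" using n by simp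
  moreover have "(1::nat) < 2^n" using n less_exp[of n] by linarith
  ultimately show False using det unfolding determining_set_def
    by (metis atLeastLessThan_iff bot_nat_0.extremum empty_iff zero_less_numeral zero_less_power)
qed

lemma det_n2: "determining_set 2 {(0, 1)}"
proof -
  have q: "qf 2 0 1 0 = 1" "qf 2 0 1 1 = 3" "qf 2 0 1 2 = 1" "qf 2 0 1 3 = 3"
    unfolding qf_def by code_simp+
  have c4: "x = 0 \<or> x = 1 \<or> x = 2 \<or> x = 3" if "x < 4" for x :: nat using that by linarith
  have v: "qf 2 0 1 x = (if x mod 2 = 0 then 1 else 3)" if "x < 4" for x
    using c4[OF that] q by auto
  show ?thesis unfolding determining_set_def
  proof (intro conjI ballI impI)
    show "finite {(0::nat, 1::nat)}" by simp
    show "{(0::nat, 1::nat)} \<subseteq> {0..<2 ^ 2} \<times> {0..<2 ^ 2}" by simp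
    fix x x' :: nat
    assume x: "x \<in> {0..<2^2}" and x': "x' \<in> {0..<2^2}"
      and h: "\<forall>(\<alpha>, \<beta>)\<in>{(0, 1)}. qf 2 \<alpha> \<beta> x = qf 2 \<alpha> \<beta> x'"
    have "qf 2 0 1 x = qf 2 0 1 x'" using h by simp
    then have "(if x mod 2 = 0 then 1 else 3) = (if x' mod 2 = 0 then 1 else (3::nat))"
      using v x x' by simp
    then show "x mod 2 ^ (2 - 1) = x' mod 2 ^ (2 - 1)"
      by (simp split: if_splits; presburger)
  qed
qed

definition dE :: "nat \<Rightarrow> nat" where "dE n = horner_sum of_bool 2 (map even [0..<n-1])"
definition dO :: "nat \<Rightarrow> nat" where "dO n = horner_sum of_bool 2 (map odd [0..<n-1])"

lemma bit_dE: "bit (dE n) i \<longleftrightarrow> i < n - 1 \<and> even i"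
  unfolding dE_def by (auto simp: bit_horner_sum_bit_iff)
lemma bit_dO: "bit (dO n) i \<longleftrightarrow> i < n - 1 \<and> odd i"
  unfolding dO_def by (auto simp: bit_horner_sum_bit_iff)

lemma small_bits: "(\<And>i. bit (a::nat) i \<Longrightarrow> i < n) \<Longrightarrow> a < 2^n"
proof -
  assume h: "\<And>i. bit (a::nat) i \<Longrightarrow> i < n"
  have "take_bit n a = a" by (rule bit_eqI) (use h in \<open>auto simp: bit_take_bit_iff\<close>)
  then show ?thesis by (metis take_bit_nat_less_exp)
qed

lemma det_n3:
  assumes n: "3 \<le> n"
  shows "determining_set n {(0, dE n), (0, dO n)}" "card {(0, dE n), (0, dO n)} = 2"
proof -
  have dlt1: "dE n < 2^n" by (rule small_bits) (auto simp add: bit_dE)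
  have dlt2: "dO n < 2^n" by (rule small_bits) (auto simp add: bit_dO)
  note dlt = dlt1 dlt2
  have ne: "dE n \<noteq> dO n" using bit_dE[of n 0] bit_dO[of n 0] n by auto
  show "card {(0, dE n), (0, dO n)} = 2" using ne by simp
  show "determining_set n {(0, dE n), (0, dO n)}" unfolding determining_set_def
  proof (intro conjI ballI impI)
    show "finite {(0, dE n), (0, dO n)}" by simp
    show "{(0::nat, dE n), (0, dO n)} \<subseteq> {0..<2 ^ n} \<times> {0..<2 ^ n}" using dlt by auto
    fix x x' assume h: "\<forall>(\<alpha>, \<beta>)\<in>{(0, dE n), (0, dO n)}. qf n \<alpha> \<beta> x = qf n \<alpha> \<beta> x'"
    have "take_bit (n - 1) x = take_bit (n - 1) x'"
      by (rule upper_core[OF n, of "dE n" "dO n"]) (use h in \<open>auto simp: bit_dE bit_dO\<close>)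
    then show "x mod 2 ^ (n - 1) = x' mod 2 ^ (n - 1)" by (simp add: take_bit_eq_mod)
  qed
qed

theorem proposition1:
  fixes n :: nat
  assumes "n \<ge> 2"
  shows "(LEAST k. \<exists>Q. determining_set n Q \<and> card Q = k) = (if n = 2 then 1 else 2)"
proof (rule Least_equality)
  show "\<exists>Q. determining_set n Q \<and> card Q = (if n = 2 then 1 else 2)"
  proof (cases "n = 2")
    case True then show ?thesis using det_n2 by auto
  next
    case False then have "3 \<le> n" using assms by simp
    then show ?thesis using det_n3 False by auto
  qed
next
  fix k assume "\<exists>Q. determining_set n Q \<and> card Q = k"
  then obtain Q where Q: "determining_set n Q" "card Q = k" by blast
  have fin: "finite Q" using Q(1) unfolding determining_set_def by simp
  have k0: "k \<noteq> 0"
  proof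
    assume "k = 0" then have "Q = {}" using Q(2) fin by simp
    then show False using Q(1) not_det_0[OF assms] by simp
  qed
  show "(if n = 2 then 1 else 2) \<le> k"
  proof (cases "n = 2")
    case True then show ?thesis using k0 by simp
  next
    case False then have n3: "3 \<le> n" using assms by simp
    have "k \<noteq> 1" using not_det_1[OF n3] Q by blast
    then show ?thesis using k0 False by simp
  qed
qed

end
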